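(* Let $0\le\alpha<1$ and $\theta>-\alpha$. For all $n=1,2,\dots$ and $s>0$, $$I_{n,\alpha,\theta}(s)=n\int_{\min\{s^{-1},1\}}^1\frac{(1-v)^{\theta+\alpha-1}}{v^{\alpha+1}}I_{n-1,\alpha,\theta+\alpha}\Big(\frac{1-v}{v}\Big)dv.$$
   Context: $\Delta_n=\{(v_1,\dots,v_n):v_i\ge0,\ \sum v_i\le1\}$. $I_{0,\alpha,\theta}\equiv1$ and, for $n\ge1$ and $s>0$, $I_{n,\alpha,\theta}(s)=\int_{\Delta_n}\prod_{i=1}^n\frac{\mathbf 1_{[1,\infty)}(sv_i)}{v_i^{\alpha+1}}\big(1-\sum_{j=1}^nv_j\big)^{\theta+\alpha n-1}dv_1\cdots dv_n$. *)

theory Defs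
  imports "HOL-Analysis.Analysis"
begin

definition lebn :: "nat \<Rightarrow> (nat \<Rightarrow> real) measure" where
  "lebn n = (\<Pi>\<^sub>M i\<in>{..<n}. lborel)"

definition Delta :: "nat \<Rightarrow> (nat \<Rightarrow> real) set" where
  "Delta n = {v. v \<in> space (lebn n) \<and> (\<forall>i<n. 0 \<le> v i) \<and> (\<Sum>j<n. v j) \<le> 1}"

definition Ifun :: "nat \<Rightarrow> real \<Rightarrow> real \<Rightarrow> real \<Rightarrow> ennreal" where
  "Ifun n \<alpha> \<theta> s =
    (if n = 0 then 1 else
     (\<integral>\<^sup>+ v \<in> Delta n.
        ennreal ((\<Prod>i<n. indicator {1..} (s * v i) / v i powr (\<alpha> + 1))
                 * (1 - (\<Sum>j<n. v j)) powr (\<theta> + \<alpha> * real n - 1))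
      \<partial>lebn n))"

end

theory Submission
  imports Defs
begin


lemma psf: "product_sigma_finite (\<lambda>_::nat. lborel::real measure)"
  unfolding product_sigma_finite_def by (auto intro: lborel.sigma_finite_measure_axioms)

lemma PiM_scale:
  fixes I :: "nat set" and c :: real
  assumes I: "finite I" and c: "c > 0"
    and h[measurable]: "h \<in> borel_measurable (PiM I (\<lambda>_. lborel::real measure))"
  shows "(\<integral>\<^sup>+x. h x \<partial>PiM I (\<lambda>_. lborel)) =
         ennreal (c ^ card I) * (\<integral>\<^sup>+w. h (\<lambda>i\<in>I. c * w i) \<partial>PiM I (\<lambda>_. lborel))"
proof -
  interpret product_sigma_finite "\<lambda>_::nat. lborel::real measure" by (rule psf)
  let ?P = "PiM I (\<lambda>_. lborel::real measure)"
  define S where "S = (\<lambda>w::nat\<Rightarrow>real. \<lambda>i\<in>I. c * w i)"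
  have S[measurable]: "S \<in> measurable ?P ?P"
    unfolding S_def by measurable
  have eq: "density (distr ?P ?P S) (\<lambda>_. ennreal (c ^ card I)) = ?P"
  proof (rule PiM_eqI[OF I])
    show "sets (density (distr ?P ?P S) (\<lambda>_. ennreal (c ^ card I))) = sets ?P" by simp
    fix A assume A: "\<And>i. i \<in> I \<Longrightarrow> A i \<in> sets (lborel::real measure)"
    have PA: "PiE I A \<in> sets ?P" using A I by (intro sets_PiM_I_finite) auto
    have pre: "S -` PiE I A \<inter> space ?P = PiE I (\<lambda>i. (*) c -` A i)"
      by (auto simp: S_def space_PiM PiE_def Pi_def extensional_def)
    have pm: "(*) c -` A i \<in> sets borel" if "i \<in> I" for i
      using measurable_sets[OF _ A[OF that], of "(*) c" borel] by simp
    have m1: "emeasure lborel ((*) c -` A i) = ennreal (inverse c) * emeasure lborel (A i)"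
      if "i \<in> I" for i
    proof -
      have "emeasure lborel ((*) c -` A i) = emeasure (distr lborel borel ((*) c)) (A i)"
        using A[OF that] by (subst emeasure_distr) auto
      also have "\<dots> = emeasure (density lborel (\<lambda>_. ennreal (inverse \<bar>c\<bar>))) (A i)"
        using c by (subst lborel_distr_mult) auto
      also have "\<dots> = ennreal (inverse c) * emeasure lborel (A i)"
        using A[OF that] c by (subst emeasure_density_const) auto
      finally show ?thesis .
    qed
    have "emeasure (density (distr ?P ?P S) (\<lambda>_. ennreal (c ^ card I))) (PiE I A)
        = ennreal (c ^ card I) * emeasure ?P (PiE I (\<lambda>i. (*) c -` A i))"
      using PA by (simp add: emeasure_density_const emeasure_distr pre)
    also have "emeasure ?P (PiE I (\<lambda>i. (*) c -` A i)) = (\<Prod>i\<in>I. ennreal (inverse c) * emeasure lborel (A i))"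
      using A I by (subst emeasure_PiM) (auto simp: m1 intro!: pm)
    also have "\<dots> = ennreal (inverse c) ^ card I * (\<Prod>i\<in>I. emeasure lborel (A i))"
      by (simp add: prod.distrib)
    also have "ennreal (c ^ card I) * \<dots> = (\<Prod>i\<in>I. emeasure lborel (A i))"
    proof -
      have "ennreal (c ^ card I) * ennreal (inverse c) ^ card I = 1"
        using c by (simp add: ennreal_power[symmetric] ennreal_mult'[symmetric] power_mult_distrib[symmetric])
      then show ?thesis by (simp add: mult.assoc[symmetric])
    qed
    finally show "emeasure (density (distr ?P ?P S) (\<lambda>_. ennreal (c ^ card I))) (PiE I A) = (\<Prod>i\<in>I. emeasure lborel (A i))" .
  qed
  have "(\<integral>\<^sup>+x. h x \<partial>?P) = (\<integral>\<^sup>+x. h x \<partial>density (distr ?P ?P S) (\<lambda>_. ennreal (c ^ card I)))"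
    by (simp add: eq)
  also have "\<dots> = (\<integral>\<^sup>+x. ennreal (c ^ card I) * h x \<partial>distr ?P ?P S)"
    by (subst nn_integral_density) auto
  also have "\<dots> = (\<integral>\<^sup>+w. ennreal (c ^ card I) * h (S w) \<partial>?P)"
    by (subst nn_integral_distr) auto
  also have "\<dots> = ennreal (c ^ card I) * (\<integral>\<^sup>+w. h (S w) \<partial>?P)"
    by (subst nn_integral_cmult) auto
  finally show ?thesis by (simp add: S_def)
qed

lemma PiM_perm:
  fixes I :: "nat set" and t :: "nat \<Rightarrow> nat"
  assumes I: "finite I" and t: "\<And>i. i \<in> I \<Longrightarrow> t i \<in> I" "\<And>i. i \<in> I \<Longrightarrow> t (t i) = i"
    and h[measurable]: "h \<in> borel_measurable (PiM I (\<lambda>_. lborel::real measure))"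
  shows "(\<integral>\<^sup>+x. h (\<lambda>i\<in>I. x (t i)) \<partial>PiM I (\<lambda>_. lborel)) = (\<integral>\<^sup>+x. h x \<partial>PiM I (\<lambda>_. lborel))"
proof -
  interpret product_sigma_finite "\<lambda>_::nat. lborel::real measure" by (rule psf)
  let ?P = "PiM I (\<lambda>_. lborel::real measure)"
  define S where "S = (\<lambda>w::nat\<Rightarrow>real. \<lambda>i\<in>I. w (t i))"
  have S[measurable]: "S \<in> measurable ?P ?P"
    unfolding S_def using t(1) by measurable
  have bij: "bij_betw t I I"
    by (rule bij_betw_byWitness[of _ t]) (use t in auto)
  have eq: "distr ?P ?P S = ?P"
  proof (rule PiM_eqI[OF I])
    show "sets (distr ?P ?P S) = sets ?P" by simp
    fix A assume A: "\<And>i. i \<in> I \<Longrightarrow> A i \<in> sets (lborel::real measure)"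
    have PA: "PiE I A \<in> sets ?P" using A I by (intro sets_PiM_I_finite) auto
    have pre: "S -` PiE I A \<inter> space ?P = PiE I (\<lambda>i. A (t i))"
      using t by (auto simp: S_def space_PiM PiE_def Pi_def extensional_def) metis+
    have "emeasure (distr ?P ?P S) (PiE I A) = emeasure ?P (PiE I (\<lambda>i. A (t i)))"
      using PA by (simp add: emeasure_distr pre)
    also have "\<dots> = (\<Prod>i\<in>I. emeasure lborel (A (t i)))"
      using A I t by (subst emeasure_PiM) auto
    also have "\<dots> = (\<Prod>i\<in>I. emeasure lborel (A i))"
      using prod.reindex_bij_betw[OF bij, of "\<lambda>i. emeasure lborel (A i)"] by simp
    finally show "emeasure (distr ?P ?P S) (PiE I A) = (\<Prod>i\<in>I. emeasure lborel (A i))" .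
  qed
  have "(\<integral>\<^sup>+x. h (S x) \<partial>?P) = (\<integral>\<^sup>+x. h x \<partial>distr ?P ?P S)"
    by (subst nn_integral_distr) auto
  then show ?thesis unfolding eq by (simp add: S_def)
qed

lemma PiM_ties:
  fixes I :: "nat set"
  assumes I: "finite I" and ij: "i \<in> I" "j \<in> I" "i \<noteq> j"
  shows "AE x in PiM I (\<lambda>_. lborel::real measure). x i \<noteq> x j"
proof -
  interpret product_sigma_finite "\<lambda>_::nat. lborel::real measure" by (rule psf)
  let ?P = "PiM I (\<lambda>_. lborel::real measure)"
  define N where "N = {x \<in> space ?P. x i = x j}"
  have N[measurable]: "N \<in> sets ?P" unfolding N_def using ij by measurable
  have Ieq: "I = insert i (I - {i})" using ij by auto
  have "emeasure ?P N = (\<integral>\<^sup>+x. indicator N x \<partial>?P)" using N by simp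
  also have "\<dots> = (\<integral>\<^sup>+x. indicator N x \<partial>PiM (insert i (I - {i})) (\<lambda>_. lborel::real measure))"
    using Ieq by simp
  also have "\<dots> = (\<integral>\<^sup>+x. (\<integral>\<^sup>+y. indicator N (x(i:=y)) \<partial>lborel) \<partial>PiM (I - {i}) (\<lambda>_. lborel::real measure))"
    using I N Ieq by (subst product_nn_integral_insert) auto
  also have "\<dots> = (\<integral>\<^sup>+x. (\<integral>\<^sup>+y. indicator {x j} y \<partial>lborel) \<partial>PiM (I - {i}) (\<lambda>_. lborel::real measure))"
  proof (rule nn_integral_cong, rule nn_integral_cong)
    fix x y assume "x \<in> space (PiM (I - {i}) (\<lambda>_. lborel::real measure))"
    then have "x(i:=y) \<in> space ?P" using ij by (auto simp: space_PiM PiE_def extensional_def)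
    then show "indicator N (x(i:=y)) = (indicator {x j} y :: ennreal)"
      using ij by (auto simp: N_def indicator_def)
  qed
  also have "\<dots> = 0" by simp
  finally have "N \<in> null_sets ?P" using N by auto
  then show ?thesis by (rule AE_I') (auto simp: N_def)
qed



definition fint :: "nat \<Rightarrow> real \<Rightarrow> real \<Rightarrow> real \<Rightarrow> (nat\<Rightarrow>real) \<Rightarrow> ennreal" where
 "fint n \<alpha> \<theta> s v = ennreal ((\<Prod>i<n. indicator {1..} (s * v i) / v i powr (\<alpha> + 1))
                 * (1 - (\<Sum>j<n. v j)) powr (\<theta> + \<alpha> * real n - 1)) * indicator (Delta n) v"

lemma Delta_sets[measurable]: "Delta n \<in> sets (lebn n)"
proof -
  have "Delta n = {v \<in> space (lebn n). (\<forall>i\<in>{..<n}. 0 \<le> v i) \<and> (\<Sum>j<n. v j) \<le> 1}"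
    unfolding Delta_def by auto
  also have "\<dots> \<in> sets (lebn n)" unfolding lebn_def by measurable
  finally show ?thesis .
qed

lemma fint_meas[measurable]: "fint n \<alpha> \<theta> s \<in> borel_measurable (lebn n)"
  unfolding fint_def
  apply (intro borel_measurable_times_ennreal borel_measurable_indicator Delta_sets measurable_compose[OF _ measurable_ennreal])
  unfolding lebn_def
  apply measurable
  done

lemma Ifun_alt: "Ifun n \<alpha> \<theta> s = (\<integral>\<^sup>+v. fint n \<alpha> \<theta> s v \<partial>lebn n)"
proof (cases "n = 0")
  case True
  have D: "Delta 0 = space (lebn 0)" by (auto simp: Delta_def)
  have "(\<integral>\<^sup>+v. fint 0 \<alpha> \<theta> s v \<partial>lebn 0) = (\<integral>\<^sup>+v. 1 \<partial>lebn 0)"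
    by (rule nn_integral_cong) (simp add: fint_def D)
  also have "\<dots> = 1" by (simp add: lebn_def PiM_empty)
  finally show ?thesis using True by (simp add: Ifun_def)
qed (simp add: Ifun_def fint_def)

definition Bset :: "nat \<Rightarrow> nat \<Rightarrow> (nat \<Rightarrow> real) set" where
  "Bset n k = {x. \<forall>j<n. x k \<le> x j}"

lemma Bset_meas[measurable]:
  assumes "k < n" shows "(\<lambda>x. indicator (Bset n k) x :: ennreal) \<in> borel_measurable (lebn n)"
proof (rule borel_measurable_indicator')
  have "{x \<in> space (lebn n). x \<in> Bset n k} = {x \<in> space (lebn n). \<forall>j\<in>{..<n}. x k \<le> x j}"
    by (auto simp: Bset_def)
  also have "\<dots> \<in> sets (lebn n)"
  proof -
    have mk: "(\<lambda>x. x k) \<in> borel_measurable (lebn n)"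
      using assms measurable_component_singleton[of k "{..<n}" "\<lambda>_. lborel::real measure"] unfolding lebn_def by simp
    have pj: "j \<in> {..<n} \<Longrightarrow> Measurable.pred (lebn n) (\<lambda>x. x k \<le> x j)" for j
    proof -
      assume "j \<in> {..<n}"
      then have mj: "(\<lambda>x. x j) \<in> borel_measurable (lebn n)"
        using measurable_component_singleton[of j "{..<n}" "\<lambda>_. lborel::real measure"] unfolding lebn_def by simp
      show ?thesis unfolding pred_def using borel_measurable_le[OF mk mj] .
    qed
    show ?thesis apply measurable apply (rule pj) by auto
  qed
  finally show "{x \<in> space (lebn n). x \<in> Bset n k} \<in> sets (lebn n)" .
qed

lemma upd_meas[measurable]: "(\<lambda>x. x(m:=v)) \<in> measurable (lebn m) (lebn (Suc m))"
  unfolding lebn_def lessThan_Suc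
  by (rule measurable_fun_upd[where J="{..<m}"]) auto



lemma inv_reindex:
  assumes t: "\<And>i. i<n \<Longrightarrow> t i < n" "\<And>i. i<n \<Longrightarrow> t (t i) = i"
  shows "bij_betw t {..<n} {..<n}" "(\<forall>i<n. P (t i)) \<longleftrightarrow> (\<forall>i<n. P i)"
proof -
  show b: "bij_betw t {..<n} {..<n}"
    by (rule bij_betw_byWitness[of _ t]) (use t in auto)
  show "(\<forall>i<n. P (t i)) \<longleftrightarrow> (\<forall>i<n. P i)" using t by metis
qed

lemma fint_perm:
  assumes x: "x \<in> space (lebn n)" and t: "\<And>i. i<n \<Longrightarrow> t i < n" "\<And>i. i<n \<Longrightarrow> t (t i) = i"
  shows "fint n \<alpha> \<theta> s (\<lambda>i\<in>{..<n}. x (t i)) = fint n \<alpha> \<theta> s x"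
proof -
  note b = inv_reindex[OF t]
  have p: "(\<Prod>i<n. g ((\<lambda>i\<in>{..<n}. x (t i)) i)) = (\<Prod>i<n. g (x i))" for g :: "real \<Rightarrow> real"
  proof -
    have "(\<Prod>i<n. g ((\<lambda>i\<in>{..<n}. x (t i)) i)) = (\<Prod>i<n. g (x (t i)))" by simp
    also have "\<dots> = (\<Prod>i<n. g (x i))" using prod.reindex_bij_betw[OF b(1), of "\<lambda>i. g (x i)"] by simp
    finally show ?thesis .
  qed
  have sm: "(\<Sum>i<n. (\<lambda>i\<in>{..<n}. x (t i)) i) = (\<Sum>i<n. x i)"
  proof -
    have "(\<Sum>i<n. (\<lambda>i\<in>{..<n}. x (t i)) i) = (\<Sum>i<n. x (t i))" by simp
    also have "\<dots> = (\<Sum>i<n. x i)" using sum.reindex_bij_betw[OF b(1), of "\<lambda>i. x i"] by simp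
    finally show ?thesis .
  qed
  have D: "(\<lambda>i\<in>{..<n}. x (t i)) \<in> Delta n \<longleftrightarrow> x \<in> Delta n"
    using x sm b(2)[of "\<lambda>i. 0 \<le> x i"] by (auto simp: Delta_def lebn_def space_PiM)
  show ?thesis unfolding fint_def
    using p[of "\<lambda>y. indicator {1..} (s * y) / y powr (\<alpha> + 1)"] sm D
    by (simp add: indicator_def)
qed

lemma Bset_perm:
  assumes t: "\<And>i. i<n \<Longrightarrow> t i < n" "\<And>i. i<n \<Longrightarrow> t (t i) = i" and k: "k < n" "t k = m"
  shows "indicator (Bset n k) (\<lambda>i\<in>{..<n}. x (t i)) = (indicator (Bset n m) x :: ennreal)"
  using inv_reindex(2)[OF t, of "\<lambda>j. x m \<le> x j"] t k by (auto simp: Bset_def indicator_def)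

lemma decomp:
  assumes "n \<ge> 1"
  shows "(\<integral>\<^sup>+x. fint n \<alpha> \<theta> s x \<partial>lebn n) = (\<Sum>k<n. \<integral>\<^sup>+x. fint n \<alpha> \<theta> s x * indicator (Bset n k) x \<partial>lebn n)"
proof -
  have AE: "AE x in lebn n. \<forall>i\<in>{..<n}. \<forall>j\<in>{..<n}. i \<noteq> j \<longrightarrow> x i \<noteq> x j"
    unfolding lebn_def
    by (intro AE_finite_allI AE_impI PiM_ties) auto
  have "(\<integral>\<^sup>+x. fint n \<alpha> \<theta> s x \<partial>lebn n) = (\<integral>\<^sup>+x. (\<Sum>k<n. fint n \<alpha> \<theta> s x * indicator (Bset n k) x) \<partial>lebn n)"
  proof (rule nn_integral_cong_AE)
    show "AE x in lebn n. fint n \<alpha> \<theta> s x = (\<Sum>k<n. fint n \<alpha> \<theta> s x * indicator (Bset n k) x)"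
      using AE
    proof eventually_elim
      case (elim x)
      have ne: "x ` {..<n} \<noteq> {}" using assms by (cases n) auto
      obtain k0 where k0: "k0 < n" "x k0 = Min (x ` {..<n})"
        using Min_in[OF _ ne] by auto
      have le: "\<forall>j<n. x k0 \<le> x j" using k0 by auto
      have "(\<Sum>k<n. indicator (Bset n k) x :: ennreal) = (\<Sum>k<n. if k = k0 then 1 else 0)"
      proof (rule sum.cong)
        fix k assume k: "k \<in> {..<n}"
        show "indicator (Bset n k) x = (if k = k0 then 1 else (0::ennreal))"
        proof (cases "k = k0")
          case True then show ?thesis using le by (simp add: Bset_def)
        next
          case False
          have "\<not> (\<forall>j<n. x k \<le> x j)"
          proof
            assume "\<forall>j<n. x k \<le> x j"
            then have "x k \<le> x k0" using k0 by auto
            moreover have "x k0 \<le> x k" using le k by auto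
            ultimately have "x k = x k0" by auto
            then show False using elim k k0(1) False by (metis lessThan_iff)
          qed
          then show ?thesis using False by (simp add: Bset_def)
        qed
      qed simp
      also have "\<dots> = 1" using k0 by simp
      finally show ?case by (simp add: sum_distrib_left[symmetric])
    qed
  qed
  also have "\<dots> = (\<Sum>k<n. \<integral>\<^sup>+x. fint n \<alpha> \<theta> s x * indicator (Bset n k) x \<partial>lebn n)"
    by (rule nn_integral_sum) auto
  finally show ?thesis .
qed



lemma pointwise:
  fixes v s c r \<alpha> \<theta> :: real and w :: "nat \<Rightarrow> real"
  assumes w: "w \<in> space (lebn m)" and v: "0 < v" "v < 1" "1 \<le> s * v" and s: "s > 0"
    and c: "c = 1 - v" and r: "r = (1 - v) / v"
  defines "z \<equiv> (\<lambda>i\<in>{..<m}. c * w i)(m:=v)"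
  defines "K \<equiv> (1 / c powr (\<alpha>+1)) ^ m * (1 / v powr (\<alpha>+1)) * c powr (\<theta> + \<alpha> * real (Suc m) - 1)"
  shows "fint (Suc m) \<alpha> \<theta> s z * indicator (Bset (Suc m) m) z = ennreal K * fint m \<alpha> (\<theta>+\<alpha>) r w"
proof -
  have c0: "c > 0" using c v by simp
  have zi: "\<And>i. i < m \<Longrightarrow> z i = c * w i" and zm: "z m = v" by (auto simp: z_def)
  have prodz: "(\<Prod>i<Suc m. f (z i)) = (\<Prod>i<m. f (c * w i)) * f v" for f :: "real \<Rightarrow> real"
    by (simp add: zi zm)
  have sumz: "(\<Sum>i<Suc m. z i) = c * (\<Sum>i<m. w i) + v"
    by (simp add: zi zm sum_distrib_left)
  have zsp: "z \<in> space (lebn (Suc m))"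
    using w by (auto simp: z_def lebn_def space_PiM PiE_def extensional_def)
  have zD: "z \<in> Delta (Suc m) \<longleftrightarrow> w \<in> Delta m"
  proof -
    have "z \<in> Delta (Suc m) \<longleftrightarrow> (\<forall>i<Suc m. 0 \<le> z i) \<and> (\<Sum>i<Suc m. z i) \<le> 1"
      using zsp by (simp add: Delta_def)
    also have "(\<forall>i<Suc m. 0 \<le> z i) \<longleftrightarrow> (\<forall>i<m. 0 \<le> w i)"
    proof -
      have "(\<forall>i<Suc m. 0 \<le> z i) \<longleftrightarrow> (\<forall>i<m. 0 \<le> z i) \<and> 0 \<le> z m" by (auto simp: less_Suc_eq)
      also have "\<dots> \<longleftrightarrow> (\<forall>i<m. 0 \<le> c * w i)" using zi zm v by auto
      also have "\<dots> \<longleftrightarrow> (\<forall>i<m. 0 \<le> w i)" using c0 by (simp add: zero_le_mult_iff)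
      finally show ?thesis .
    qed
    finally have "z \<in> Delta (Suc m) \<longleftrightarrow> (\<forall>i<m. 0 \<le> w i) \<and> c * (\<Sum>i<m. w i) + v \<le> 1"
      by (simp only: sumz)
    also have "c * (\<Sum>i<m. w i) + v \<le> 1 \<longleftrightarrow> (\<Sum>i<m. w i) \<le> 1"
    proof -
      have "c * (\<Sum>i<m. w i) + v \<le> 1 \<longleftrightarrow> c * (\<Sum>i<m. w i) \<le> c * 1" using c by linarith
      also have "\<dots> \<longleftrightarrow> (\<Sum>i<m. w i) \<le> 1" using c0 by (rule mult_le_cancel_left_pos)
      finally show ?thesis .
    qed
    finally show ?thesis using w by (simp add: Delta_def)
  qed
  have zB: "z \<in> Bset (Suc m) m \<longleftrightarrow> (\<forall>j<m. v \<le> c * w j)"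
    by (auto simp: Bset_def less_Suc_eq zi zm)
  show ?thesis
  proof (cases "w \<in> Delta m \<and> (\<forall>j<m. v \<le> c * w j)")
    case True
    then have wD: "w \<in> Delta m" and wv: "\<And>j. j < m \<Longrightarrow> v \<le> c * w j" by auto
    have wpos: "w j > 0" if "j < m" for j
    proof -
      have "0 < c * w j" using wv[OF that] v by linarith
      then show ?thesis using c0 by (simp add: zero_less_mult_iff)
    qed
    have S1: "1 \<le> s * (c * w j)" if "j < m" for j
      using mult_left_mono[OF wv[OF that], of s] s v by linarith
    have S2: "\<And>j. j < m \<Longrightarrow> 1 \<le> r * w j"
      using wv v unfolding r c by (simp add: field_simps)
    have sw: "(\<Sum>i<m. w i) \<le> 1" using wD by (simp add: Delta_def)
    define Y where "Y = (\<Prod>i<m. 1 / w i powr (\<alpha>+1)) * (1 - (\<Sum>j<m. w j)) powr (\<theta> + \<alpha> + \<alpha> * real m - 1)"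
    have L: "fint (Suc m) \<alpha> \<theta> s z * indicator (Bset (Suc m) m) z =
       ennreal ((\<Prod>i<m. 1 / (c * w i) powr (\<alpha>+1)) * (1 / v powr (\<alpha>+1)) * (c * (1 - (\<Sum>j<m. w j))) powr (\<theta> + \<alpha> * real (Suc m) - 1))"
    proof -
      have "(\<Prod>i<m. indicator {1..} (s * (c * w i)) / (c * w i) powr (\<alpha> + 1)) = (\<Prod>i<m. 1 / (c * w i) powr (\<alpha>+1))"
        by (rule prod.cong) (auto simp: S1)
      moreover have "1 - (c * (\<Sum>i<m. w i) + v) = c * (1 - (\<Sum>j<m. w j))" using c by (simp add: algebra_simps)
      ultimately show ?thesis
        using zD wD zB wv v v(3) unfolding fint_def prodz[of "\<lambda>y. indicator {1..} (s * y) / y powr (\<alpha> + 1)"] sumz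
        by simp
    qed
    have R: "fint m \<alpha> (\<theta>+\<alpha>) r w = ennreal Y"
    proof -
      have "(\<Prod>i<m. indicator {1..} (r * w i) / w i powr (\<alpha> + 1)) = (\<Prod>i<m. 1 / w i powr (\<alpha>+1))"
        by (rule prod.cong) (auto simp: S2)
      then show ?thesis using wD unfolding fint_def Y_def by (simp add: algebra_simps)
    qed
    have eqr: "(\<Prod>i<m. 1 / (c * w i) powr (\<alpha>+1)) * (1 / v powr (\<alpha>+1)) * (c * (1 - (\<Sum>j<m. w j))) powr (\<theta> + \<alpha> * real (Suc m) - 1) = K * Y"
    proof -
      have "(\<Prod>i<m. 1 / (c * w i) powr (\<alpha>+1)) = (1 / c powr (\<alpha>+1)) ^ m * (\<Prod>i<m. 1 / w i powr (\<alpha>+1))"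
      proof -
        have "(\<Prod>i<m. 1 / (c * w i) powr (\<alpha>+1)) = (\<Prod>i<m. (1 / c powr (\<alpha>+1)) * (1 / w i powr (\<alpha>+1)))"
          by (rule prod.cong) (use c0 wpos in \<open>auto simp: powr_mult\<close>)
        then show ?thesis by (simp only: prod.distrib prod_constant card_lessThan)
      qed
      moreover have "(c * (1 - (\<Sum>j<m. w j))) powr (\<theta> + \<alpha> * real (Suc m) - 1) = c powr (\<theta> + \<alpha> * real (Suc m) - 1) * (1 - (\<Sum>j<m. w j)) powr (\<theta> + \<alpha> + \<alpha> * real m - 1)"
      proof -
        have "\<theta> + \<alpha> * real (Suc m) - 1 = \<theta> + \<alpha> + \<alpha> * real m - 1" by (simp add: algebra_simps)
        then show ?thesis using c0 sw by (simp only: powr_mult)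
      qed
      ultimately show ?thesis unfolding K_def Y_def by (simp add: algebra_simps)
    qed
    have K0: "K \<ge> 0" unfolding K_def using c0 by simp
    show ?thesis using L R eqr K0 by (simp add: ennreal_mult')
  next
    case False
    have L: "fint (Suc m) \<alpha> \<theta> s z * indicator (Bset (Suc m) m) z = 0"
      using False zD zB by (auto simp: fint_def)
    have R: "fint m \<alpha> (\<theta>+\<alpha>) r w = 0"
    proof (cases "w \<in> Delta m")
      case False then show ?thesis by (simp add: fint_def)
    next
      case True
      with \<open>\<not> (w \<in> Delta m \<and> (\<forall>j<m. v \<le> c * w j))\<close> obtain j where j: "j < m" "c * w j < v" by auto
      have "r * w j < 1" using j v unfolding r c by (simp add: field_simps)
      then have pz: "(\<Prod>i<m. indicator {1..} (r * w i) / w i powr (\<alpha> + 1)) = 0"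
        using j by (intro prod_zero) (auto intro!: bexI[of _ j] simp: indicator_def)
      show ?thesis unfolding fint_def pz by simp
    qed
    show ?thesis using L R by simp
  qed
qed


lemma sym_piece:
  assumes k: "k < Suc m"
  shows "(\<integral>\<^sup>+x. fint (Suc m) \<alpha> \<theta> s x * indicator (Bset (Suc m) k) x \<partial>lebn (Suc m))
       = (\<integral>\<^sup>+x. fint (Suc m) \<alpha> \<theta> s x * indicator (Bset (Suc m) m) x \<partial>lebn (Suc m))"
proof -
  define t where "t = (\<lambda>i::nat. if i = k then m else if i = m then k else i)"
  have t1: "\<And>i. i < Suc m \<Longrightarrow> t i < Suc m" and t2: "\<And>i. i < Suc m \<Longrightarrow> t (t i) = i"
    using k by (auto simp: t_def)
  have tk: "t k = m" by (simp add: t_def)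
  have hm: "(\<lambda>x. fint (Suc m) \<alpha> \<theta> s x * indicator (Bset (Suc m) k) x) \<in> borel_measurable (lebn (Suc m))"
    using k by measurable
  have "(\<integral>\<^sup>+x. fint (Suc m) \<alpha> \<theta> s (\<lambda>i\<in>{..<Suc m}. x (t i)) * indicator (Bset (Suc m) k) (\<lambda>i\<in>{..<Suc m}. x (t i)) \<partial>lebn (Suc m))
      = (\<integral>\<^sup>+x. fint (Suc m) \<alpha> \<theta> s x * indicator (Bset (Suc m) k) x \<partial>lebn (Suc m))"
    using PiM_perm[of "{..<Suc m}" t "\<lambda>x. fint (Suc m) \<alpha> \<theta> s x * indicator (Bset (Suc m) k) x"] hm t1 t2
    unfolding lebn_def by simp
  moreover have "(\<integral>\<^sup>+x. fint (Suc m) \<alpha> \<theta> s (\<lambda>i\<in>{..<Suc m}. x (t i)) * indicator (Bset (Suc m) k) (\<lambda>i\<in>{..<Suc m}. x (t i)) \<partial>lebn (Suc m))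
      = (\<integral>\<^sup>+x. fint (Suc m) \<alpha> \<theta> s x * indicator (Bset (Suc m) m) x \<partial>lebn (Suc m))"
    by (rule nn_integral_cong) (simp add: fint_perm[OF _ t1 t2] Bset_perm[OF t1 t2 k tk])
  ultimately show ?thesis by simp
qed

lemma real_ident:
  fixes c v \<alpha> \<theta> :: real
  assumes c0: "c > 0"
  shows "c ^ m * ((1 / c powr (\<alpha>+1)) ^ m * (1 / v powr (\<alpha>+1)) * c powr (\<theta> + \<alpha> * real (Suc m) - 1))
       = c powr (\<theta> + \<alpha> - 1) / v powr (\<alpha> + 1)"
proof -
  have a: "c ^ m = c powr real m" using c0 by (simp add: powr_realpow)
  have b: "(1 / c powr (\<alpha>+1)) ^ m = c powr (- ((\<alpha>+1) * real m))"
  proof -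
    have "1 / c powr (\<alpha>+1) = c powr (-(\<alpha>+1))" by (simp only: powr_minus_divide)
    then have "(1 / c powr (\<alpha>+1)) ^ m = c powr (real m * (-(\<alpha>+1)))"
      using c0 by (simp add: powr_power)
    then show ?thesis by (simp add: algebra_simps)
  qed
  have "c ^ m * ((1 / c powr (\<alpha>+1)) ^ m * (1 / v powr (\<alpha>+1)) * c powr (\<theta> + \<alpha> * real (Suc m) - 1))
      = c powr (real m + (- ((\<alpha>+1) * real m)) + (\<theta> + \<alpha> * real (Suc m) - 1)) / v powr (\<alpha>+1)"
  proof -
    have "c ^ m * ((1 / c powr (\<alpha>+1)) ^ m * (1 / v powr (\<alpha>+1)) * c powr (\<theta> + \<alpha> * real (Suc m) - 1))
      = c powr real m * c powr (- ((\<alpha>+1) * real m)) * c powr (\<theta> + \<alpha> * real (Suc m) - 1) / v powr (\<alpha>+1)"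
      by (simp only: a b) (simp only: divide_inverse mult_ac mult_1_left mult_1_right)
    also have "\<dots> = c powr (real m + (- ((\<alpha>+1) * real m)) + (\<theta> + \<alpha> * real (Suc m) - 1)) / v powr (\<alpha>+1)"
      by (simp only: powr_add)
    finally show ?thesis .
  qed
  also have "real m + (- ((\<alpha>+1) * real m)) + (\<theta> + \<alpha> * real (Suc m) - 1) = \<theta> + \<alpha> - 1"
    by (simp add: algebra_simps)
  finally show ?thesis .
qed

lemma inner:
  fixes \<alpha> \<theta> s v :: real
  assumes s: "s > 0" and v1: "v \<noteq> 1"
  shows "(\<integral>\<^sup>+x. fint (Suc m) \<alpha> \<theta> s (x(m:=v)) * indicator (Bset (Suc m) m) (x(m:=v)) \<partial>lebn m)
     = ennreal ((1 - v) powr (\<theta> + \<alpha> - 1) / v powr (\<alpha> + 1)) * Ifun m \<alpha> (\<theta> + \<alpha>) ((1 - v) / v)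
       * indicator {min (1/s) 1..1} v"
proof (cases "1 \<le> s * v \<and> v < 1")
  case True
  then have sv: "1 \<le> s * v" and vl: "v < 1" by auto
  have v0: "v > 0"
  proof (rule ccontr)
    assume "\<not> v > 0"
    then have "s * v \<le> 0" using s by (simp add: mult_nonneg_nonpos)
    then show False using sv by simp
  qed
  define c where "c = 1 - v"
  have c0: "c > 0" using vl by (simp add: c_def)
  define r where "r = (1 - v) / v"
  define G where "G = (\<lambda>x. fint (Suc m) \<alpha> \<theta> s (x(m:=v)) * indicator (Bset (Suc m) m) (x(m:=v)))"
  define K where "K = (1 / c powr (\<alpha>+1)) ^ m * (1 / v powr (\<alpha>+1)) * c powr (\<theta> + \<alpha> * real (Suc m) - 1)"
  have Gm: "G \<in> borel_measurable (lebn m)"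
    unfolding G_def
    using measurable_compose[OF upd_meas fint_meas] measurable_compose[OF upd_meas Bset_meas[of m "Suc m"]]
    by (intro borel_measurable_times_ennreal) auto
  have "integral\<^sup>N (lebn m) G = ennreal (c ^ m) * (\<integral>\<^sup>+w. G (\<lambda>i\<in>{..<m}. c * w i) \<partial>lebn m)"
    using PiM_scale[of "{..<m}" c G] Gm c0 unfolding lebn_def by simp
  also have "(\<integral>\<^sup>+w. G (\<lambda>i\<in>{..<m}. c * w i) \<partial>lebn m) = (\<integral>\<^sup>+w. ennreal K * fint m \<alpha> (\<theta>+\<alpha>) r w \<partial>lebn m)"
    by (rule nn_integral_cong) (unfold G_def K_def, rule pointwise[OF _ v0 vl sv s c_def r_def])
  also have "\<dots> = ennreal K * Ifun m \<alpha> (\<theta>+\<alpha>) r"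
    by (subst nn_integral_cmult) (auto simp: Ifun_alt)
  finally have "integral\<^sup>N (lebn m) G = ennreal (c ^ m) * (ennreal K * Ifun m \<alpha> (\<theta>+\<alpha>) r)" .
  also have "\<dots> = ennreal (c ^ m * K) * Ifun m \<alpha> (\<theta>+\<alpha>) r"
    using c0 by (simp add: ennreal_mult' mult.assoc)
  also have "c ^ m * K = (1 - v) powr (\<theta> + \<alpha> - 1) / v powr (\<alpha> + 1)"
    unfolding K_def using real_ident[OF c0] by (simp add: c_def)
  also have "indicator {min (1/s) 1..1} v = (1::ennreal)"
  proof -
    have "1/s \<le> v" using sv s by (simp add: field_simps)
    then show ?thesis using vl by (auto simp: indicator_def)
  qed
  ultimately show ?thesis unfolding G_def r_def by simp
next
  case False
  have L: "fint (Suc m) \<alpha> \<theta> s (x(m:=v)) * indicator (Bset (Suc m) m) (x(m:=v)) = 0" for x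
  proof (cases "s * v < 1")
    case True
    have pz: "(\<Prod>i<Suc m. indicator {1..} (s * (x(m:=v)) i) / (x(m:=v)) i powr (\<alpha> + 1)) = 0"
      using True by (intro prod_zero) (auto intro!: bexI[of _ m] simp: indicator_def)
    show ?thesis unfolding fint_def pz by simp
  next
    case False
    with \<open>\<not> (1 \<le> s * v \<and> v < 1)\<close> v1 have v1': "v > 1" by auto
    have "x(m:=v) \<notin> Delta (Suc m)"
    proof
      assume D: "x(m:=v) \<in> Delta (Suc m)"
      then have nn: "\<forall>i<Suc m. 0 \<le> (x(m:=v)) i" and sm: "(\<Sum>j<Suc m. (x(m:=v)) j) \<le> 1"
        by (auto simp: Delta_def)
      have "(x(m:=v)) m \<le> (\<Sum>j<Suc m. (x(m:=v)) j)"
        by (rule member_le_sum) (use nn in auto)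
      then show False using sm v1' by simp
    qed
    then show ?thesis unfolding fint_def by simp
  qed
  have R: "indicator {min (1/s) 1..1} v = (0::ennreal)"
  proof (rule ccontr)
    assume "indicator {min (1/s) 1..1} v \<noteq> (0::ennreal)"
    then have vi: "min (1/s) 1 \<le> v" "v \<le> 1" by (auto simp: indicator_def split: if_splits)
    then have vl: "v < 1" using v1 by simp
    then have "s * v < 1" using False by auto
    then have "v < 1/s" using s by (simp add: field_simps)
    then show False using vi vl by (auto simp: min_def split: if_splits)
  qed
  have "(\<integral>\<^sup>+x. fint (Suc m) \<alpha> \<theta> s (x(m:=v)) * indicator (Bset (Suc m) m) (x(m:=v)) \<partial>lebn m) = (\<integral>\<^sup>+x. 0 \<partial>lebn m)"
    by (rule nn_integral_cong) (simp only: L)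
  then show ?thesis using R by simp
qed

theorem lemma4p1:
  fixes \<alpha> \<theta> s :: real and n :: nat
  assumes "0 \<le> \<alpha>" "\<alpha> < 1" "\<theta> > - \<alpha>" "n \<ge> 1" "s > 0"
  shows "Ifun n \<alpha> \<theta> s =
    of_nat n * (\<integral>\<^sup>+ v \<in> {min (1 / s) 1..1}.
       ennreal ((1 - v) powr (\<theta> + \<alpha> - 1) / v powr (\<alpha> + 1))
       * Ifun (n - 1) \<alpha> (\<theta> + \<alpha>) ((1 - v) / v) \<partial>lborel)"
proof -
  obtain m where n: "n = Suc m" using assms(4) by (cases n) auto
  interpret product_sigma_finite "\<lambda>_::nat. lborel::real measure" by (rule psf)
  have "Ifun n \<alpha> \<theta> s = (\<Sum>k<Suc m. \<integral>\<^sup>+x. fint (Suc m) \<alpha> \<theta> s x * indicator (Bset (Suc m) k) x \<partial>lebn (Suc m))"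
    unfolding Ifun_alt n by (rule decomp) simp
  also have "\<dots> = (\<Sum>k<Suc m. \<integral>\<^sup>+x. fint (Suc m) \<alpha> \<theta> s x * indicator (Bset (Suc m) m) x \<partial>lebn (Suc m))"
    by (rule sum.cong) (auto intro: sym_piece)
  also have "\<dots> = of_nat (Suc m) * (\<integral>\<^sup>+x. fint (Suc m) \<alpha> \<theta> s x * indicator (Bset (Suc m) m) x \<partial>lebn (Suc m))"
    by simp
  also have "(\<integral>\<^sup>+x. fint (Suc m) \<alpha> \<theta> s x * indicator (Bset (Suc m) m) x \<partial>lebn (Suc m))
     = (\<integral>\<^sup>+v. (\<integral>\<^sup>+x. fint (Suc m) \<alpha> \<theta> s (x(m:=v)) * indicator (Bset (Suc m) m) (x(m:=v)) \<partial>lebn m) \<partial>lborel)"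
  proof -
    have hm: "(\<lambda>x. fint (Suc m) \<alpha> \<theta> s x * indicator (Bset (Suc m) m) x) \<in> borel_measurable (PiM (insert m {..<m}) (\<lambda>_. lborel::real measure))"
      using fint_meas[of "Suc m" \<alpha> \<theta> s] Bset_meas[of m "Suc m"] unfolding lebn_def lessThan_Suc
      by (intro borel_measurable_times_ennreal) auto
    show ?thesis
      unfolding lebn_def lessThan_Suc
      by (rule product_nn_integral_insert_rev[OF _ _ hm]) auto
  qed
  also have "(\<integral>\<^sup>+v. (\<integral>\<^sup>+x. fint (Suc m) \<alpha> \<theta> s (x(m:=v)) * indicator (Bset (Suc m) m) (x(m:=v)) \<partial>lebn m) \<partial>lborel)
     = (\<integral>\<^sup>+ v \<in> {min (1 / s) 1..1}.
       ennreal ((1 - v) powr (\<theta> + \<alpha> - 1) / v powr (\<alpha> + 1))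
       * Ifun m \<alpha> (\<theta> + \<alpha>) ((1 - v) / v) \<partial>lborel)"
  proof (rule nn_integral_cong_AE)
    show "AE v in lborel. (\<integral>\<^sup>+x. fint (Suc m) \<alpha> \<theta> s (x(m:=v)) * indicator (Bset (Suc m) m) (x(m:=v)) \<partial>lebn m)
       = ennreal ((1 - v) powr (\<theta> + \<alpha> - 1) / v powr (\<alpha> + 1)) * Ifun m \<alpha> (\<theta> + \<alpha>) ((1 - v) / v)
         * indicator {min (1 / s) 1..1} v"
      using AE_lborel_singleton[of "1::real"]
      by eventually_elim (rule inner[OF assms(5)])
  qed
  finally show ?thesis by (simp add: n)
qed

end
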